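(* Let $\eta_i\ge0$ with $\sum_i\eta_i<\infty$ and at least one $\eta_i>0$, fix $N>0$, and let $\kappa,\gamma,q_i$ be as in the context. Define $E=\frac{1}{1-\gamma}\sum_iq_i^2\eta_i^2$ (single-task error, $E_A=E_B$ when $N_A=N_B=N$), $E_{ave}=(1-\gamma/2)E$ (error of the averaged model $(f_A+f_B)/2$), and $E_{A\to B}(1)=\frac{1}{(1-\gamma)^2}\sum_iq_i^4\eta_i^2$ (sequential error with $\rho=1$). Then $E_{A\to B}(1)< E_{ave}< E$.
   Context: $\kappa>0$ is the solution of $1=\sum_i\eta_i/(\kappa+N\eta_i)$, $\gamma=\sum_iN\eta_i^2/(\kappa+N\eta_i)^2$ (so $0<\gamma<1$), and $q_i=\kappa/(\kappa+N\eta_i)$. These expressions are the replica-method generalization errors in the noise-free equal-sample-size setting $N_A=N_B=N$ with identical targets. *)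

theory Defs
  imports Complex_Main
begin

text \<open>Replica-method quantities in the noise-free, equal-sample-size setting.
  The spectrum is a sequence eta indexed by nat; kappa is the positive solution of
  1 = sum_i eta_i/(kappa + N eta_i).\<close>

definition qcoef :: "real \<Rightarrow> real \<Rightarrow> (nat \<Rightarrow> real) \<Rightarrow> nat \<Rightarrow> real" where
  "qcoef \<kappa> N \<eta> i = \<kappa> / (\<kappa> + N * \<eta> i)"

definition gam :: "real \<Rightarrow> real \<Rightarrow> (nat \<Rightarrow> real) \<Rightarrow> real" where
  "gam \<kappa> N \<eta> = (\<Sum>i. N * (\<eta> i)^2 / (\<kappa> + N * \<eta> i)^2)"

definition E_single :: "real \<Rightarrow> real \<Rightarrow> (nat \<Rightarrow> real) \<Rightarrow> real" where
  "E_single \<kappa> N \<eta> = 1 / (1 - gam \<kappa> N \<eta>) * (\<Sum>i. (qcoef \<kappa> N \<eta> i)^2 * (\<eta> i)^2)"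

definition E_ave :: "real \<Rightarrow> real \<Rightarrow> (nat \<Rightarrow> real) \<Rightarrow> real" where
  "E_ave \<kappa> N \<eta> = (1 - gam \<kappa> N \<eta> / 2) * E_single \<kappa> N \<eta>"

definition E_seq1 :: "real \<Rightarrow> real \<Rightarrow> (nat \<Rightarrow> real) \<Rightarrow> real" where
  "E_seq1 \<kappa> N \<eta> = 1 / (1 - gam \<kappa> N \<eta>)^2 * (\<Sum>i. (qcoef \<kappa> N \<eta> i)^4 * (\<eta> i)^2)"

end

theory Submission
  imports Defs
begin

lemma key_poly:
  fixes p g :: real
  assumes "0 < p" "p < 1"
  shows "0 < 2*p^2 - p^3 - 2*g*p + g^2*p/2 + g^2/2"
proof -
  have "2*(1+p)*(2*p^2 - p^3 - 2*g*p + g^2*p/2 + g^2/2) = ((1+p)*g - 2*p)^2 + 2*p^3*(1-p)"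
    by (simp add: algebra_simps power2_eq_square power3_eq_cube)
  moreover have "0 < 2*p^3*(1-p)" using assms by simp
  moreover have "0 \<le> ((1+p)*g - 2*p)^2" by simp
  ultimately have "0 < 2*(1+p)*(2*p^2 - p^3 - 2*g*p + g^2*p/2 + g^2/2)" by linarith
  then show ?thesis using assms by (simp add: zero_less_mult_iff)
qed

lemma aux2:
  fixes u a N :: real assumes "u \<noteq> 0" "N \<noteq> 0"
  shows "u^2 * (a / (N*u))^2 = a^2 / N^2"
  using assms by (simp add: power_divide power_mult_distrib)

lemma aux4:
  fixes u a N :: real assumes "u \<noteq> 0" "N \<noteq> 0"
  shows "u^4 * (a / (N*u))^2 = u^2 * (a^2 / N^2)"
proof -
  have "u^4 * (a / (N*u))^2 = u^2 * (u^2 * (a / (N*u))^2)" by (simp add: power_add[symmetric])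
  then show ?thesis using aux2[OF assms] by simp
qed

theorem proposition3:
  fixes \<eta> :: "nat \<Rightarrow> real" and N \<kappa> :: real
  assumes nonneg: "\<And>i. \<eta> i \<ge> 0"
    and summ: "summable \<eta>"
    and pos: "\<exists>i. \<eta> i > 0"
    and N_pos: "N > 0"
    and kappa_pos: "\<kappa> > 0"
    and kappa_eq: "(\<lambda>i. \<eta> i / (\<kappa> + N * \<eta> i)) sums 1"
  shows "E_seq1 \<kappa> N \<eta> < E_ave \<kappa> N \<eta> \<and> E_ave \<kappa> N \<eta> < E_single \<kappa> N \<eta>"
proof -
  define p where "p i = N * \<eta> i / (\<kappa> + N * \<eta> i)" for i
  have den: "\<kappa> + N * \<eta> i > 0" for i using nonneg[of i] N_pos kappa_pos
    by (simp add: add_pos_nonneg)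
  have p0: "0 \<le> p i" for i unfolding p_def using den[of i] nonneg[of i] N_pos by simp
  have p1: "p i < 1" for i unfolding p_def using den[of i] kappa_pos by simp
  have pbound: "p i \<le> (N/\<kappa>) * \<eta> i" for i
  proof -
    have "N * \<eta> i / (\<kappa> + N * \<eta> i) \<le> N * \<eta> i / \<kappa>"
      using den[of i] nonneg[of i] N_pos kappa_pos
      by (intro divide_left_mono) (auto simp: mult_nonneg_nonneg)
    then show ?thesis unfolding p_def by simp
  qed
  obtain j where j: "\<eta> j > 0" using pos by blast
  have pj: "p j > 0" unfolding p_def using den[of j] j N_pos by simp
  have sp: "summable p"
    by (rule summable_comparison_test[where g="\<lambda>i. (N/\<kappa>) * \<eta> i"])
       (use p0 pbound summ in \<open>auto intro: summable_mult\<close>)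
  have spk: "summable (\<lambda>i. p i ^ k)" if "k \<ge> 1" for k
  proof (rule summable_comparison_test[OF _ sp])
    show "\<exists>N. \<forall>n\<ge>N. norm (p n ^ k) \<le> p n"
    proof (intro exI allI impI)
      fix n
      have "p n ^ k \<le> p n ^ 1"
        using p0[of n] p1[of n] that by (intro power_decreasing) auto
      then show "norm (p n ^ k) \<le> p n" using p0[of n] by simp
    qed
  qed
  define A where "A = suminf p"
  define B where "B = (\<Sum>i. p i ^ 2)"
  define C where "C = (\<Sum>i. p i ^ 3)"
  define D where "D = (\<Sum>i. p i ^ 4)"
  have hA: "p sums A" using sp A_def by (simp add: summable_sums)
  have hB: "(\<lambda>i. p i ^ 2) sums B" using spk[of 2] B_def by (simp add: summable_sums)
  have hC: "(\<lambda>i. p i ^ 3) sums C" using spk[of 3] C_def by (simp add: summable_sums)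
  have hD: "(\<lambda>i. p i ^ 4) sums D" using spk[of 4] D_def by (simp add: summable_sums)
  have "(\<lambda>i. N * (\<eta> i / (\<kappa> + N * \<eta> i))) sums (N * 1)"
    by (rule sums_mult[OF kappa_eq])
  then have "p sums N" unfolding p_def by simp
  then have AN: "A = N" using hA sums_unique2 by blast
  have gterm: "N * (\<eta> i)^2 / (\<kappa> + N * \<eta> i)^2 = p i ^ 2 / N" for i
  proof -
    have "p i ^ 2 / N = N * N * (\<eta> i)^2 / (N * (\<kappa> + N * \<eta> i)^2)"
      unfolding p_def by (simp add: power_divide power2_eq_square mult.commute mult.left_commute)
    also have "\<dots> = N * (\<eta> i)^2 / (\<kappa> + N * \<eta> i)^2"
      using N_pos by (simp add: mult.assoc)
    finally show ?thesis by simp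
  qed
  have "(\<lambda>i. p i ^ 2 / N) sums (B / N)" using sums_divide[OF hB] .
  then have gam_eq: "gam \<kappa> N \<eta> = B / N"
    unfolding gam_def gterm by (rule sums_unique[symmetric])
  have qterm: "qcoef \<kappa> N \<eta> i = 1 - p i" for i
    unfolding qcoef_def p_def using den[of i] by (simp add: field_simps)
  have etap: "\<eta> i = \<kappa> * p i / (N * (1 - p i))" for i
  proof -
    have q: "1 - p i = \<kappa> / (\<kappa> + N * \<eta> i)"
      unfolding p_def using den[of i] by (simp add: field_simps)
    have ne: "N * \<kappa> \<noteq> 0" using N_pos kappa_pos by simp
    show ?thesis unfolding q unfolding p_def using den[of i] ne
      by (simp add: divide_simps)
  qed
  define X where "X = \<kappa>^2 / N^2"
  have Xpos: "X > 0" unfolding X_def using N_pos kappa_pos by simp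
  have t2: "(qcoef \<kappa> N \<eta> i)^2 * (\<eta> i)^2 = X * p i ^ 2" for i
    unfolding qterm etap[of i] X_def using p1[of i] N_pos
    by (subst aux2) (auto simp: power_mult_distrib)
  have t4: "(qcoef \<kappa> N \<eta> i)^4 * (\<eta> i)^2 = X * (p i ^ 2 - 2 * p i ^ 3 + p i ^ 4)" for i
    unfolding qterm etap[of i] X_def using p1[of i] N_pos
    by (subst aux4) (auto simp: power_mult_distrib algebra_simps add_divide_distrib diff_divide_distrib power2_eq_square power3_eq_cube power4_eq_xxxx)
  have S2: "(\<Sum>i. (qcoef \<kappa> N \<eta> i)^2 * (\<eta> i)^2) = X * B"
    unfolding t2 by (rule sums_unique[symmetric], rule sums_mult[OF hB])
  have "(\<lambda>i. p i ^ 2 - 2 * p i ^ 3 + p i ^ 4) sums (B - 2 * C + D)"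
    by (intro sums_add sums_diff sums_mult hB hC hD)
  then have S4: "(\<Sum>i. (qcoef \<kappa> N \<eta> i)^4 * (\<eta> i)^2) = X * (B - 2*C + D)"
    unfolding t4 by (intro sums_unique[symmetric] sums_mult)
  define g where "g = B / N"
  have "(\<lambda>i. p i ^ 2) sums B" by (rule hB)
  have Bpos: "B > 0"
  proof -
    have "0 < (\<Sum>i. p i ^ 2)"
      by (rule suminf_pos2[OF spk[of 2] _ , of j]) (use pj in auto)
    then show ?thesis by (simp add: B_def)
  qed
  have "(\<lambda>i. p i - p i ^ 2) sums (A - B)" by (intro sums_diff hA hB)
  moreover have "0 < (\<Sum>i. p i - p i ^ 2)"
  proof (rule suminf_pos2[of _ j])
    show "summable (\<lambda>i. p i - p i ^ 2)" using sp spk[of 2] by (rule summable_diff) simp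
    show "0 \<le> p n - p n ^ 2" for n
        using mult_left_le_one_le[of "p n" "p n"] p0[of n] p1[of n] by (simp add: power2_eq_square)
    show "0 < p j - p j ^ 2" using pj p1[of j]
      by (simp add: power2_eq_square mult_less_cancel_left1)
  qed
  ultimately have BA: "B < A" by (simp add: sums_iff)
  have g0: "0 < g" unfolding g_def using Bpos N_pos by simp
  have g1: "g < 1" unfolding g_def using BA AN N_pos by simp
  have "(\<lambda>i. 2 * p i ^ 3 - p i ^ 4 - 2*g * p i ^ 2 + (g^2/2) * p i ^ 2 + (g^2/2) * p i) sums
        (2*C - D - 2*g*B + (g^2/2)*B + (g^2/2)*A)"
    by (intro sums_add sums_diff sums_mult hA hB hC hD)
  moreover have "0 < (\<Sum>i. 2 * p i ^ 3 - p i ^ 4 - 2*g * p i ^ 2 + (g^2/2) * p i ^ 2 + (g^2/2) * p i)"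
  proof (rule suminf_pos2[of _ j])
    show "summable (\<lambda>i. 2 * p i ^ 3 - p i ^ 4 - 2*g * p i ^ 2 + (g^2/2) * p i ^ 2 + (g^2/2) * p i)"
      using calculation by (rule sums_summable)
    have e: "2 * p i ^ 3 - p i ^ 4 - 2*g * p i ^ 2 + (g^2/2) * p i ^ 2 + (g^2/2) * p i
          = p i * (2*p i^2 - p i^3 - 2*g*p i + g^2*p i/2 + g^2/2)" for i
      by (simp add: algebra_simps power2_eq_square power3_eq_cube power4_eq_xxxx)
    show "0 \<le> 2 * p n ^ 3 - p n ^ 4 - 2*g * p n ^ 2 + (g^2/2) * p n ^ 2 + (g^2/2) * p n" for n
    proof -
      show "0 \<le> 2 * p n ^ 3 - p n ^ 4 - 2*g * p n ^ 2 + (g^2/2) * p n ^ 2 + (g^2/2) * p n"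
      proof (cases "p n = 0")
        case True then show ?thesis by simp
      next
        case False
        then have "0 < p n" using p0[of n] by simp
        then show ?thesis unfolding e using key_poly[of "p n" g] p1[of n] by simp
      qed
    qed
    show "0 < 2 * p j ^ 3 - p j ^ 4 - 2*g * p j ^ 2 + (g^2/2) * p j ^ 2 + (g^2/2) * p j"
      unfolding e using key_poly[of "p j" g] p1[of j] pj by simp
  qed
  ultimately have K: "0 < 2*C - D - 2*g*B + (g^2/2)*B + (g^2/2)*A" by (simp add: sums_iff)
  have gA: "g * A = B" unfolding g_def AN using N_pos by simp
  have K2: "B - 2*C + D < (1-g)*(1-g/2)*B"
  proof -
    have e: "(g^2/2)*A = (g/2) * B" using gA by (simp add: power2_eq_square algebra_simps)
    have "(1-g)*(1-g/2)*B - (B-2*C+D) = 2*C - D - 2*g*B + (g^2/2)*B + (g/2)*B"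
      by (simp add: field_simps power2_eq_square)
    then show ?thesis using K e by linarith
  qed
  have Es: "E_single \<kappa> N \<eta> = X * B / (1 - g)"
    unfolding E_single_def S2 gam_eq g_def[symmetric] by simp
  have Ea: "E_ave \<kappa> N \<eta> = (1 - g/2) * (X * B / (1 - g))"
    unfolding E_ave_def Es gam_eq g_def[symmetric] by simp
  have Eq: "E_seq1 \<kappa> N \<eta> = X * (B - 2*C + D) / (1 - g)^2"
    unfolding E_seq1_def S4 gam_eq g_def[symmetric] by simp
  have pos1: "0 < 1 - g" using g1 by simp
  have "X * (B - 2*C + D) < X * ((1-g)*(1-g/2)*B)"
    using K2 Xpos by (simp only: mult_strict_left_mono)
  then have "X * (B - 2*C + D) / (1 - g)^2 < X * ((1-g)*(1-g/2)*B) / (1 - g)^2"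
    using pos1 by (simp add: divide_strict_right_mono)
  also have "\<dots> = (1 - g/2) * (X * B / (1 - g))"
  proof -
    have "X * ((1-g)*(1-g/2)*B) / (1 - g)^2 = ((1-g) * ((1 - g/2) * X * B)) / ((1-g) * (1 - g))"
      by (simp add: power2_eq_square mult.commute mult.left_commute)
    also have "\<dots> = (1 - g/2) * X * B / (1 - g)"
      using pos1 by (subst mult_divide_mult_cancel_left) auto
    finally show ?thesis by simp
  qed
  finally have c1: "E_seq1 \<kappa> N \<eta> < E_ave \<kappa> N \<eta>" using Eq Ea by simp
  have "0 < X * B / (1 - g)" using Xpos Bpos pos1 by simp
  then have "(1 - g/2) * (X * B / (1 - g)) < 1 * (X * B / (1 - g))"
    using g0 by (intro mult_strict_right_mono) auto
  then have c2: "E_ave \<kappa> N \<eta> < E_single \<kappa> N \<eta>" using Es Ea by simp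
  show ?thesis using c1 c2 by simp
qed

end
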